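(* Let $n\in\mathbb N$, let $f=\sum_{j\ge0}a_jz^j$ be extremal for $M_n$ with $f(0)>0$, and write $\log f=\sum_{j\ge0}b_jz^j$ for a holomorphic logarithm of $f$. Let $P(z)=a_n+2\sum_{j=1}^na_{n-j}z^j$. If $\mathrm{Re}\,P$ vanishes at $n$ distinct points of $\partial\mathbb D$, then $|b_j|\le 2n/j$ for $1\le j\le n$. In particular $|b_n|\le2$, with equality if and only if these $n$ zeros of $\mathrm{Re}\,P$ are equidistributed on $\partial\mathbb D$ (i.e. they form the set $\{\omega e^{2\pi ik/n}:k=1,\dots,n\}$ for some $\omega\in\partial\mathbb D$).
   Context: $\mathbb D$ is the open unit disc; $\mathcal B_0=\{f$ holomorphic on $\mathbb D: 0<|f|\le1\}$; $M_n(f)=\mathrm{Re}\,a_n$; $f\in\mathcal B_0$ is extremal for $M_n$ if $M_n(f)\ge M_n(F)$ for all $F\in\mathcal B_0$. *)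

theory Defs
  imports "HOL-Complex_Analysis.Complex_Analysis"
begin

definition taylor_coef :: "(complex \<Rightarrow> complex) \<Rightarrow> nat \<Rightarrow> complex" where
  "taylor_coef f j = (deriv ^^ j) f 0 / of_nat (fact j)"

definition B0 :: "(complex \<Rightarrow> complex) set" where
  "B0 = {f. f holomorphic_on ball 0 1 \<and> (\<forall>z\<in>ball 0 1. 0 < norm (f z) \<and> norm (f z) \<le> 1)}"

definition M :: "nat \<Rightarrow> (complex \<Rightarrow> complex) \<Rightarrow> real" where
  "M n f = Re (taylor_coef f n)"

definition extremal :: "nat \<Rightarrow> (complex \<Rightarrow> complex) \<Rightarrow> bool" where
  "extremal n f \<longleftrightarrow> f \<in> B0 \<and> (\<forall>F\<in>B0. M n F \<le> M n f)"

end

theory Submission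
  imports Defs "HOL-Computational_Algebra.Polynomial_FPS"
begin



definition agree :: "nat \<Rightarrow> complex fps \<Rightarrow> complex fps \<Rightarrow> bool" where
  "agree n X Y \<longleftrightarrow> (\<forall>i\<le>n. fps_nth X i = fps_nth Y i)"

lemma agree_mult:
  assumes "agree n X Y" "agree n U V"
  shows "agree n (X * U) (Y * V)"
  using assms unfolding agree_def
  by (auto simp: fps_mult_nth intro!: sum.cong)

lemma agree_inverse:
  assumes "fps_nth X 0 \<noteq> 0" "agree n X Y"
  shows "agree n (inverse X) (inverse Y)"
proof -
  have Y0: "fps_nth Y 0 \<noteq> 0" using assms unfolding agree_def by auto
  have r: "agree n (inverse X) (inverse X)" by (simp add: agree_def)
  have "agree n (inverse X * X) (inverse X * Y)"
    by (rule agree_mult[OF r assms(2)])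
  hence "agree n 1 (inverse X * Y)" using assms(1) by (simp add: inverse_mult_eq_1)
  hence "agree n (1 * inverse Y) (inverse X * Y * inverse Y)"
    by (rule agree_mult) (simp add: agree_def)
  moreover have "inverse X * Y * inverse Y = inverse X"
    using Y0 by (simp add: mult.assoc inverse_mult_eq_1')
  ultimately show ?thesis by (simp add: agree_def)
qed

lemma agree_mono: "agree n X Y \<Longrightarrow> m \<le> n \<Longrightarrow> agree m X Y"
  by (auto simp: agree_def)

lemma geom_fps: "(1 - fps_const c * fps_X) * Abs_fps (\<lambda>k. c ^ k) = (1::complex fps)"
proof (rule fps_ext)
  fix m
  show "fps_nth ((1 - fps_const c * fps_X) * Abs_fps (\<lambda>k. c ^ k)) m = fps_nth (1::complex fps) m"
    by (cases m) (simp_all add: algebra_simps mult.assoc)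
qed

lemma lin_factor:
  fixes \<zeta> :: complex
  assumes "norm \<zeta> = 1"
  shows "(fps_X - fps_const (cnj \<zeta>)) * Abs_fps (\<lambda>m. -2 * \<zeta> ^ (m+1)) = 2"
proof (rule fps_ext)
  have c: "cnj \<zeta> * \<zeta> = 1" using assms by (metis complex_norm_square mult.commute of_real_1 power_one)
  fix m
  show "fps_nth ((fps_X - fps_const (cnj \<zeta>)) * Abs_fps (\<lambda>m. -2 * \<zeta> ^ (m+1))) m = fps_nth (2::complex fps) m"
  proof (cases m)
    case 0 thus ?thesis using c by (simp add: algebra_simps)
  next
    case (Suc k)
    have "cnj \<zeta> * (2 * \<zeta> ^ (k + 2)) = 2 * \<zeta>^(k+1)" 
      using c by (simp add: power_add algebra_simps power2_eq_square)
    thus ?thesis using Suc by (simp add: algebra_simps fps_numeral_nth)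
  qed
qed

lemma prod_deriv:
  assumes "finite Z" "\<forall>\<zeta>\<in>Z. norm \<zeta> = 1"
  shows "fps_deriv (\<Prod>\<zeta>\<in>Z. (fps_X - fps_const (cnj \<zeta>))^2) =
    (\<Prod>\<zeta>\<in>Z. (fps_X - fps_const (cnj \<zeta>))^2) * (\<Sum>\<zeta>\<in>Z. Abs_fps (\<lambda>m. -2 * \<zeta> ^ (m+1)))"
  using assms
proof (induction Z rule: finite_induct)
  case empty thus ?case by simp
next
  case (insert z Z)
  define u :: "complex fps" where "u = fps_X - fps_const (cnj z)"
  define k where "k = Abs_fps (\<lambda>m. -2 * z ^ (m+1))"
  have uk: "u * k = 2" unfolding u_def k_def by (rule lin_factor) (use insert in auto)
  have du: "fps_deriv (u^2) = u^2 * k"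
  proof -
    have "fps_deriv (u^2) = 2 * u" by (simp add: u_def fps_deriv_power power2_eq_square algebra_simps)
    also have "\<dots> = u^2 * k" using uk by (simp add: power2_eq_square algebra_simps)
    finally show ?thesis .
  qed
  have P: "(\<Prod>\<zeta>\<in>insert z Z. (fps_X - fps_const (cnj \<zeta>))^2) = u^2 * (\<Prod>\<zeta>\<in>Z. (fps_X - fps_const (cnj \<zeta>))^2)"
    using insert by (simp add: u_def)
  have S: "(\<Sum>\<zeta>\<in>insert z Z. Abs_fps (\<lambda>m. -2 * \<zeta> ^ (m+1))) = k + (\<Sum>\<zeta>\<in>Z. Abs_fps (\<lambda>m. -2 * \<zeta> ^ (m+1)))"
    using insert by (simp add: k_def)
  show ?case unfolding P S using insert
    by (simp add: fps_deriv_mult du algebra_simps)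
qed



lemma poly_factor_dvd:
  fixes p :: "complex poly"
  assumes "finite Z" "inj_on r Z" "p \<noteq> 0" "\<forall>z\<in>Z. order (r z) p \<ge> 2"
  shows "(\<Prod>z\<in>Z. [:-r z, 1:]^2) dvd p"
  using assms
proof (induction Z rule: finite_induct)
  case empty thus ?case by simp
next
  case (insert z Z)
  from insert have "(\<Prod>z\<in>Z. [:-r z, 1:]^2) dvd p" by auto
  then obtain s where s: "p = (\<Prod>z\<in>Z. [:-r z, 1:]^2) * s" by (auto elim: dvdE)
  have nz: "(\<Prod>z\<in>Z. [:-r z, 1:]^2) * s \<noteq> 0" using s insert by auto
  have "poly (\<Prod>z\<in>Z. [:-r z, 1:]^2) (r z) \<noteq> 0"
    using insert by (auto simp: poly_prod inj_on_def)
  hence "order (r z) (\<Prod>z\<in>Z. [:-r z, 1:]^2) = 0" by (rule order_0I)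
  hence "order (r z) s = order (r z) p" using order_mult[OF nz, of "r z"] s by simp
  hence "order (r z) s \<ge> 2" using insert by auto
  moreover have "s \<noteq> 0" using nz by auto
  ultimately have "[:-r z, 1:]^2 dvd s" by (simp add: order_divides)
  then obtain t where t: "s = [:-r z, 1:]^2 * t" by (auto elim: dvdE)
  have "p = (\<Prod>z\<in>insert z Z. [:-r z, 1:]^2) * t"
    using insert s t by (simp add: algebra_simps)
  thus ?case by simp
qed

lemma dvd_same_degree:
  fixes p q :: "complex poly"
  assumes "p dvd q" "q \<noteq> 0" "degree p = degree q"
  shows "\<exists>c. q = smult c p"
proof -
  obtain r where r: "q = p * r" using assms(1) by (auto elim: dvdE)
  have "p \<noteq> 0" "r \<noteq> 0" using r assms by auto
  hence "degree q = degree p + degree r" using r degree_mult_eq by blast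
  hence "degree r = 0" using assms by simp
  then obtain c where "r = [:c:]" by (meson degree_eq_zeroE)
  thus ?thesis using r by auto
qed

lemma deriv_zero_lemma:
  fixes hh :: "complex \<Rightarrow> complex"
  assumes "(hh has_field_derivative D) (at 0)"
    and "\<And>t::real. Im (hh (of_real t)) = 0" and "\<And>t::real. Re (hh (of_real t)) \<ge> 0"
    and "hh 0 = 0"
  shows "D = 0"
proof -
  have vd: "((\<lambda>t. hh (of_real t)) has_vector_derivative D) (at 0)"
    using has_vector_derivative_real_field[of hh D 0] assms(1) by simp
  hence d1: "((\<lambda>t. Re (hh (of_real t))) has_real_derivative Re D) (at 0)"
    by (rule has_field_derivative_Re)
  have d2: "((\<lambda>t. Im (hh (of_real t))) has_real_derivative Im D) (at 0)"
    using vd by (simp add: has_vector_derivative_complex_iff)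
  have "Re D = 0"
    by (rule DERIV_local_min[OF d1, of 1]) (use assms in auto)
  moreover have "Im D = 0"
  proof -
    have "((\<lambda>t. Im (hh (of_real t))) has_real_derivative 0) (at 0)"
      using assms(2) by simp
    thus ?thesis using d2 DERIV_unique by blast
  qed
  ultimately show ?thesis by (simp add: complex_eq_iff)
qed

lemma blaschke_lt:
  fixes s :: real and w :: complex
  assumes "0 < s" "s < 1" "norm w < 1"
  shows "norm (of_real s - w) < norm (1 - of_real s * w)"
proof -
  have "(norm (of_real s - w))^2 < (norm (1 - of_real s * w))^2"
  proof -
    have w2: "(Re w)^2 + (Im w)^2 < 1" using assms(3)
      by (metis cmod_power2 norm_ge_zero power_less_one_iff zero_less_numeral power_strict_mono abs_norm_cancel)
    have "(norm (of_real s - w))^2 = (s - Re w)^2 + (Im w)^2" by (simp add: cmod_power2)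
    moreover have "(norm (1 - of_real s * w))^2 = (1 - s * Re w)^2 + (s * Im w)^2" by (simp add: cmod_power2)
    moreover have "(s - Re w)^2 + (Im w)^2 < (1 - s * Re w)^2 + (s * Im w)^2"
    proof -
      have "0 < (1 - s^2) * (1 - ((Re w)^2 + (Im w)^2))"
        using assms w2 by (intro mult_pos_pos) (auto simp: power_less_one_iff)
      thus ?thesis by (simp add: power2_eq_square algebra_simps)
    qed
    ultimately show ?thesis by simp
  qed
  thus ?thesis by (simp add: power_less_imp_less_base)
qed



lemma unit_re_one: fixes w :: complex assumes "norm w = 1" "Re w = 1" shows "w = 1"
proof -
  have "(Re w)^2 + (Im w)^2 = 1" using assms(1) by (metis cmod_power2 power_one)
  hence "Im w = 0" using assms(2) by simp
  thus ?thesis using assms(2) by (simp add: complex_eq_iff)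
qed

lemma equi:
  fixes Z :: "complex set"
  assumes n: "n \<ge> 1" and Zs: "Z \<subseteq> sphere 0 1" and cZ: "card Z = n"
  shows "norm (\<Sum>\<zeta>\<in>Z. \<zeta>^n) = n \<longleftrightarrow>
     (\<exists>\<omega>. norm \<omega> = 1 \<and> Z = {\<omega> * exp (2 * of_real pi * \<i> * of_nat k / of_nat n) | k. k \<in> {1..n}})"
proof
  have fin: "finite Z" using cZ n by (metis card.infinite not_one_le_zero)
  have nZ: "\<And>\<zeta>. \<zeta> \<in> Z \<Longrightarrow> norm \<zeta> = 1" using Zs by auto
  assume eq: "norm (\<Sum>\<zeta>\<in>Z. \<zeta>^n) = n"
  define S where "S = (\<Sum>\<zeta>\<in>Z. \<zeta>^n)"
  define u where "u = S / of_nat n"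
  have nu: "norm u = 1" using eq n by (simp add: u_def S_def norm_divide)
  have le: "\<And>\<zeta>. \<zeta> \<in> Z \<Longrightarrow> Re (\<zeta>^n * cnj u) \<le> 1"
  proof -
    fix \<zeta> assume "\<zeta> \<in> Z"
    hence "norm (\<zeta>^n * cnj u) = 1" using nZ nu by (simp add: norm_mult norm_power)
    thus "Re (\<zeta>^n * cnj u) \<le> 1" by (metis complex_Re_le_cmod)
  qed
  have "(\<Sum>\<zeta>\<in>Z. Re (\<zeta>^n * cnj u)) = Re (S * cnj u)"
    by (simp add: S_def sum_distrib_right Re_sum)
  also have "S * cnj u = of_nat n"
  proof -
    have "S = of_nat n * u" using n by (simp add: u_def)
    hence "S * cnj u = of_nat n * (u * cnj u)" by simp
    also have "u * cnj u = 1" using nu by (metis complex_norm_square of_real_1 power_one)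
    finally show ?thesis by simp
  qed
  finally have sumre: "(\<Sum>\<zeta>\<in>Z. Re (\<zeta>^n * cnj u)) = n" by simp
  have "(\<Sum>\<zeta>\<in>Z. 1 - Re (\<zeta>^n * cnj u)) = 0"
    using sumre cZ by (simp add: sum_subtractf)
  hence "\<forall>\<zeta>\<in>Z. 1 - Re (\<zeta>^n * cnj u) = 0"
    using fin le by (subst (asm) sum_nonneg_eq_0_iff) auto
  hence pw: "\<And>\<zeta>. \<zeta> \<in> Z \<Longrightarrow> \<zeta>^n = u"
  proof -
    fix \<zeta> assume z: "\<zeta> \<in> Z" and h: "\<forall>\<zeta>\<in>Z. 1 - Re (\<zeta>^n * cnj u) = 0"
    have "norm (\<zeta>^n * cnj u) = 1" using z nZ nu by (simp add: norm_mult norm_power)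
    hence "\<zeta>^n * cnj u = 1" using h z unit_re_one by auto
    hence "\<zeta>^n * (cnj u * u) = u" by (metis mult.assoc mult_1)
    moreover have "cnj u * u = 1" using nu by (metis complex_norm_square of_real_1 power_one mult.commute)
    ultimately show "\<zeta>^n = u" by simp
  qed
  obtain \<omega> where \<omega>: "\<omega> \<in> Z" using cZ n by (metis card.empty ex_in_conv not_one_le_zero)
  have n\<omega>: "norm \<omega> = 1" using nZ \<omega> by auto
  define S' where "S' = {\<omega> * exp (2 * of_real pi * \<i> * of_nat k / of_nat n) | k. k \<in> {1..n}}"
  have S'img: "S' = (\<lambda>k. \<omega> * exp (2 * of_real pi * \<i> * of_nat k / of_nat n)) ` {1..n}"
    by (auto simp: S'_def)
  have "Z \<subseteq> S'"
  proof
    fix \<zeta> assume z: "\<zeta> \<in> Z"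
    have "\<omega> \<noteq> 0" using n\<omega> by auto
    have "(\<zeta> / \<omega>)^n = 1" using pw[OF z] pw[OF \<omega>] \<open>\<omega> \<noteq> 0\<close> nu
      by (auto simp: power_divide)
    hence "\<zeta> / \<omega> \<in> {exp(2 * of_real pi * \<i> * of_nat j / of_nat n) | j. j < n}"
      using complex_roots_unity[OF n] by blast
    then obtain j where j: "j < n" "\<zeta> / \<omega> = exp(2 * of_real pi * \<i> * of_nat j / of_nat n)" by auto
    define k where "k = (if j = 0 then n else j)"
    have "exp(2 * of_real pi * \<i> * of_nat k / of_nat n) = exp(2 * of_real pi * \<i> * of_nat j / of_nat n)"
      using complex_root_unity_eq[OF n, of k j] by (simp add: k_def)
    hence "\<zeta> = \<omega> * exp(2 * of_real pi * \<i> * of_nat k / of_nat n)"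
      using j \<open>\<omega> \<noteq> 0\<close> by (simp add: field_simps)
    moreover have "k \<in> {1..n}" using j n by (auto simp: k_def)
    ultimately show "\<zeta> \<in> S'" by (auto simp: S'_def)
  qed
  moreover have "finite S'" by (simp add: S'img)
  moreover have "card S' \<le> card Z" using cZ by (metis S'img card_atLeastAtMost card_image_le diff_Suc_1 finite_atLeastAtMost)
  ultimately have "Z = S'" using card_seteq by blast
  thus "\<exists>\<omega>. norm \<omega> = 1 \<and> Z = {\<omega> * exp (2 * of_real pi * \<i> * of_nat k / of_nat n) | k. k \<in> {1..n}}"
    using n\<omega> S'_def by blast
next
  assume "\<exists>\<omega>. norm \<omega> = 1 \<and> Z = {\<omega> * exp (2 * of_real pi * \<i> * of_nat k / of_nat n) | k. k \<in> {1..n}}"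
  then obtain \<omega> where n\<omega>: "norm \<omega> = 1" and Z: "Z = {\<omega> * exp (2 * of_real pi * \<i> * of_nat k / of_nat n) | k. k \<in> {1..n}}" by blast
  have "\<And>\<zeta>. \<zeta> \<in> Z \<Longrightarrow> \<zeta>^n = \<omega>^n"
    using Z complex_root_unity[of n] n by (auto simp: power_mult_distrib)
  hence "(\<Sum>\<zeta>\<in>Z. \<zeta>^n) = of_nat n * \<omega>^n" using cZ by simp
  thus "norm (\<Sum>\<zeta>\<in>Z. \<zeta>^n) = n" using n\<omega> by (simp add: norm_mult norm_power)
qed



lemma tc: "f has_fps_expansion A \<Longrightarrow> taylor_coef f k = fps_nth A k"
  by (simp add: taylor_coef_def fps_nth_fps_expansion)

lemma B0_hol: "f \<in> B0 \<Longrightarrow> f has_fps_expansion fps_expansion f 0"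
  unfolding B0_def by (intro has_fps_expansion_fps_expansion[of "ball 0 1"]) auto

lemma extremal_real:
  assumes "extremal n f"
  shows "Im (taylor_coef f n) = 0"
proof -
  have fB: "f \<in> B0" and mx: "\<And>F. F \<in> B0 \<Longrightarrow> M n F \<le> M n f" using assms by (auto simp: extremal_def)
  define A where "A = fps_expansion f 0"
  have hA: "f has_fps_expansion A" using B0_hol[OF fB] by (simp add: A_def)
  define a where "a = taylor_coef f n"
  show ?thesis
  proof (cases "a = 0")
    case True thus ?thesis by (simp add: a_def)
  next
    case False
    define c where "c = cnj a / of_real (norm a)"
    have nc: "norm c = 1" using False by (simp add: c_def norm_divide)
    have "(\<lambda>z. c * f z) \<in> B0" using fB nc unfolding B0_def
      by (auto intro!: holomorphic_intros simp: norm_mult)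
    hence "M n (\<lambda>z. c * f z) \<le> M n f" by (rule mx)
    moreover have "taylor_coef (\<lambda>z. c * f z) n = c * a"
    proof -
      have "(\<lambda>z. c * f z) has_fps_expansion fps_const c * A"
        by (rule has_fps_expansion_cmult_left[OF hA])
      thus ?thesis using tc[OF hA] by (simp add: tc a_def)
    qed
    moreover have "c * a = of_real (norm a)"
    proof -
      have "cnj a * a = (of_real (norm a))^2" using complex_norm_square[of a] by (simp add: mult.commute)
      thus ?thesis using False by (simp add: c_def power2_eq_square)
    qed
    ultimately have "norm a \<le> Re a" unfolding M_def a_def by (metis Re_complex_of_real)
    hence "(Re a)^2 + (Im a)^2 \<le> (Re a)^2"
      by (metis cmod_power2 norm_ge_zero power_mono)
    hence "Im a = 0" by simp
    thus ?thesis by (simp add: a_def)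
  qed
qed

lemma V_coef:
  fixes s :: real and \<zeta> :: complex
  defines "V \<equiv> (fps_const (of_real s) - fps_const \<zeta> * fps_X) * Abs_fps (\<lambda>k. (of_real s * \<zeta>) ^ k)"
  shows "fps_nth V 0 = of_real s"
    and "fps_nth V (Suc m) = \<zeta>^(Suc m) * of_real s ^ m * (of_real s ^ 2 - 1)"
  unfolding V_def by (simp_all add: algebra_simps power2_eq_square power_mult_distrib)

lemma extremal_pos_s:
  assumes "extremal n f" "norm \<zeta> = 1" "0 < s" "s < 1"
  shows "Re (taylor_coef f n) + (s + 1) * Re (\<Sum>j=1..n. taylor_coef f (n - j) * \<zeta>^j * of_real s ^ (j - 1)) \<ge> 0"
proof -
  have fB: "f \<in> B0" and mx: "\<And>F. F \<in> B0 \<Longrightarrow> M n F \<le> M n f" using assms by (auto simp: extremal_def)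
  define A where "A = fps_expansion f 0"
  have hA: "f has_fps_expansion A" using B0_hol[OF fB] by (simp add: A_def)
  define v where "v = (\<lambda>z. (of_real s - \<zeta> * z) * inverse (1 - of_real s * (\<zeta> * z)))"
  define F where "F = (\<lambda>z. f z * (1/2 + 1/2 * v z))"
  have lt1: "norm (of_real s * (\<zeta> * z)) < 1" if "z \<in> ball 0 1" for z
  proof -
    have "norm z < 1" using that by simp
    hence "s * norm z < 1" using assms by (smt (verit) mult_left_le_one_le norm_ge_zero)
    thus ?thesis using assms by (simp add: norm_mult)
  qed
  have nz: "1 - of_real s * (\<zeta> * z) \<noteq> 0" if "z \<in> ball 0 1" for z
  proof
    assume "1 - of_real s * (\<zeta> * z) = 0"
    hence "norm (of_real s * (\<zeta> * z)) = 1" by (metis eq_iff_diff_eq_0 norm_one)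
    thus False using lt1[OF that] by simp
  qed
  have vlt: "norm (v z) < 1" if "z \<in> ball 0 1" for z
  proof -
    have "norm (\<zeta> * z) < 1" using that assms by (simp add: norm_mult)
    hence "norm (of_real s - \<zeta> * z) < norm (1 - of_real s * (\<zeta> * z))"
      using blaschke_lt assms by blast
    moreover have "0 < norm (1 - of_real s * (\<zeta> * z))" using nz[OF that] by simp
    moreover have "norm (v z) = norm (of_real s - \<zeta> * z) / norm (1 - of_real s * (\<zeta> * z))"
      unfolding v_def by (simp only: norm_mult norm_inverse divide_inverse)
    ultimately show ?thesis by (metis divide_less_eq_1_pos)
  qed
  have FB: "F \<in> B0"
    unfolding B0_def mem_Collect_eq
  proof
    show "F holomorphic_on ball 0 1" using fB nz unfolding F_def v_def B0_def
      by (auto intro!: holomorphic_intros)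
    show "\<forall>z\<in>ball 0 1. 0 < norm (F z) \<and> norm (F z) \<le> 1"
    proof
      fix z :: complex assume z: "z \<in> ball 0 1"
      have f1: "0 < norm (f z)" "norm (f z) \<le> 1" using fB z by (auto simp: B0_def)
      have "norm (1/2 + 1/2 * v z) \<le> 1/2 + 1/2 * norm (v z)"
        using norm_triangle_ineq[of "1/2" "1/2 * v z"] by (simp add: norm_mult)
      hence u1: "norm (1/2 + 1/2 * v z) \<le> 1" using vlt[OF z] by simp
      have "1/2 + 1/2 * v z \<noteq> 0"
      proof
        assume "1/2 + 1/2 * v z = 0"
        moreover have "v z = 2 * (1/2 + 1/2 * v z) - 1" by (simp add: algebra_simps)
        ultimately have "v z = -1" by simp
        thus False using vlt[OF z] by simp
      qed
      hence u0: "0 < norm (1/2 + 1/2 * v z)" by simp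
      show "0 < norm (F z) \<and> norm (F z) \<le> 1"
        using f1 u0 u1 by (auto simp: F_def norm_mult intro: mult_le_one)
    qed
  qed
  define E where "E = Abs_fps (\<lambda>k. (of_real s * \<zeta>) ^ k)"
  define V where "V = (fps_const (of_real s) - fps_const \<zeta> * fps_X) * E"
  have hV0: "v has_fps_expansion (fps_const (of_real s) - fps_const \<zeta> * fps_X) * inverse (1 - fps_const (of_real s) * (fps_const \<zeta> * fps_X))"
    unfolding v_def
  apply (rule has_fps_expansion_mult)
  apply (rule has_fps_expansion_diff)
  apply (rule has_fps_expansion_const)
  apply (rule has_fps_expansion_cmult_left)
  apply (rule has_fps_expansion_fps_X)
  apply (rule has_fps_expansion_inverse)
  apply (rule has_fps_expansion_diff)
  apply (rule has_fps_expansion_1)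
  apply (rule has_fps_expansion_cmult_left)
  apply (rule has_fps_expansion_cmult_left)
  apply (rule has_fps_expansion_fps_X)
  apply simp
  done
  have "inverse (1 - fps_const (of_real s) * (fps_const \<zeta> * fps_X)) = E"
  proof -
    have eq: "fps_const (of_real s) * (fps_const \<zeta> * fps_X) = fps_const (of_real s * \<zeta>) * fps_X"
      by (simp add: mult.assoc[symmetric])
    show ?thesis unfolding E_def by (rule fps_inverse_unique, subst eq, rule geom_fps)
  qed
  hence hV: "v has_fps_expansion V" using hV0 by (simp add: V_def)
  define U where "U = fps_const (1/2) + fps_const (1/2) * V"
  have hU: "(\<lambda>z. 1/2 + 1/2 * v z) has_fps_expansion U"
    unfolding U_def by (rule has_fps_expansion_add[OF has_fps_expansion_const has_fps_expansion_cmult_left[OF hV]])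
  have hF: "F has_fps_expansion A * U" unfolding F_def by (rule has_fps_expansion_mult[OF hA hU])
  define a where "a = (\<lambda>k. taylor_coef f k)"
  have aA: "\<And>k. fps_nth A k = a k" using tc[OF hA] by (simp add: a_def)
  define W where "W = (\<Sum>j=1..n. a (n - j) * \<zeta>^j * of_real s ^ (j - 1))"
  have V0: "fps_nth V 0 = of_real s" unfolding V_def E_def by (rule V_coef(1))
  have VS: "fps_nth V (Suc m) = \<zeta>^(Suc m) * of_real s ^ m * (of_real s ^ 2 - 1)" for m
    unfolding V_def E_def by (rule V_coef(2))
  have U0: "fps_nth U 0 = of_real ((1+s)/2)"
  proof -
    have "fps_nth U 0 = 1/2 + 1/2 * fps_nth V 0" by (simp only: U_def fps_add_nth fps_nth_fps_const fps_mult_left_const_nth simp_thms if_True)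
    also have "\<dots> = of_real ((1+s)/2)" unfolding V0 by (simp add: field_simps)
    finally show ?thesis .
  qed
  have US: "fps_nth U j = of_real ((s^2-1)/2) * (\<zeta>^j * of_real s ^ (j - 1))" if "j \<ge> 1" for j
  proof -
    define m where "m = j - 1"
    have m: "j = Suc m" using that by (simp add: m_def)
    have "fps_nth U j = 0 + 1/2 * fps_nth V (Suc m)" unfolding m by (simp only: U_def fps_add_nth fps_nth_fps_const fps_mult_left_const_nth nat.distinct if_False)
    also have "\<dots> = 0 + 1/2 * (\<zeta>^(Suc m) * of_real s ^ m * (of_real s ^ 2 - 1))" by (simp only: VS)
    also have "\<dots> = of_real ((s^2-1)/2) * (\<zeta>^j * of_real s ^ (j - 1))"
      unfolding m by (simp add: field_simps)
    finally show ?thesis .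
  qed
  have "taylor_coef F n = fps_nth (A * U) n" by (rule tc[OF hF])
  also have "\<dots> = (\<Sum>j=0..n. fps_nth A (n - j) * fps_nth U j)"
    by (simp add: fps_mult_nth) (subst sum.atLeastAtMost_rev, simp)
  also have "\<dots> = fps_nth A n * fps_nth U 0 + (\<Sum>j=1..n. fps_nth A (n - j) * fps_nth U j)"
    by (simp add: sum.atLeast_Suc_atMost)
  also have "(\<Sum>j=1..n. fps_nth A (n - j) * fps_nth U j) = of_real ((s^2-1)/2) * W"
    unfolding W_def sum_distrib_left by (intro sum.cong) (auto simp: aA US)
  finally have coef: "taylor_coef F n = of_real ((1+s)/2) * a n + of_real ((s^2-1)/2) * W"
    by (simp add: aA U0 mult.commute)
  have "M n F \<le> M n f" by (rule mx[OF FB])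
  hence "(1+s)/2 * Re (a n) + (s^2-1)/2 * Re W \<le> Re (a n)"
    by (simp add: M_def coef a_def)
  hence "(s - 1) * (Re (a n) + (s + 1) * Re W) \<le> 0"
    by (simp add: power2_eq_square algebra_simps divide_simps)
  hence "Re (a n) + (s + 1) * Re W \<ge> 0"
    using assms(4) by (simp add: mult_le_0_iff)
  thus ?thesis by (simp add: W_def a_def)
qed



lemma extremal_pos:
  assumes "extremal n f" "norm \<zeta> = 1"
  shows "Re (taylor_coef f n + 2 * (\<Sum>j=1..n. taylor_coef f (n - j) * \<zeta> ^ j)) \<ge> 0"
proof -
  define \<phi> where "\<phi> = (\<lambda>s::real. Re (taylor_coef f n) + (s + 1) * Re (\<Sum>j=1..n. taylor_coef f (n - j) * \<zeta>^j * of_real s ^ (j - 1)))"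
  have c: "isCont \<phi> 1" unfolding \<phi>_def by (intro continuous_intros continuous_Re)
  hence "(\<phi> \<longlongrightarrow> \<phi> 1) (at 1)" by (simp add: isCont_def)
  hence "(\<phi> \<longlongrightarrow> \<phi> 1) (at_left 1)" by (rule tendsto_within_subset) auto
  moreover have "eventually (\<lambda>s. \<phi> s \<ge> 0) (at_left 1)"
  proof -
    have "eventually (\<lambda>s. s \<in> {0<..<(1::real)}) (at_left 1)" by (rule eventually_at_left_real) simp
    thus ?thesis by (rule eventually_mono) (use extremal_pos_s[OF assms] in \<open>auto simp: \<phi>_def\<close>)
  qed
  ultimately have "\<phi> 1 \<ge> 0" by (intro tendsto_lowerbound) auto
  thus ?thesis by (simp add: \<phi>_def)
qed



lemma R_identity:
  fixes a :: "nat \<Rightarrow> complex" and w :: complex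
  assumes nw: "norm w = 1" and an: "cnj (a n) = a n"
  shows "(\<Sum>i\<le>2*n. (if i \<le> n then a i else cnj (a (2*n - i))) * cnj w ^ i)
       = cnj w ^ n * of_real (Re (a n + 2 * (\<Sum>j=1..n. a (n-j) * w^j)))"
proof -
  define y where "y = cnj w"
  have yw: "y * w = 1" using nw unfolding y_def by (metis complex_norm_square mult.commute of_real_1 power_one)
  define S where "S = (\<Sum>j=1..n. a (n-j) * w^j)"
  have cS: "cnj S = (\<Sum>j=1..n. cnj (a (n-j)) * y^j)" by (simp add: S_def y_def)
  have re: "of_real (Re (a n + 2 * S)) = a n + S + cnj S"
  proof -
    have "of_real (2 * Re (a n + 2 * S)) = (a n + 2 * S) + cnj (a n + 2 * S)"
      by (simp only: complex_add_cnj)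
    also have "\<dots> = 2 * (a n + S + cnj S)" using an by simp
    finally have h: "2 * of_real (Re (a n + 2 * S)) = (2::complex) * (a n + S + cnj S)"
      by (simp only: of_real_mult of_real_numeral)
    show ?thesis using h by (metis mult_cancel_left zero_neq_numeral)
  qed
  have ypow: "y^n * w^j = y^(n-j)" if "j \<le> n" for j
  proof -
    have "y^n = y^(n-j) * y^j" using that by (simp flip: power_add)
    hence "y^n * w^j = y^(n-j) * (y * w)^j" by (simp add: power_mult_distrib)
    thus ?thesis using yw by simp
  qed
  have rhs: "y^n * (a n + S + cnj S) = a n * y^n + (\<Sum>j=1..n. a (n-j) * y^(n-j)) + (\<Sum>j=1..n. cnj (a (n-j)) * y^(n+j))"
  proof -
    have "y^n * S = (\<Sum>j=1..n. a (n-j) * y^(n-j))"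
      unfolding S_def sum_distrib_left by (intro sum.cong) (auto simp: ypow[symmetric] mult.commute mult.left_commute)
    moreover have "y^n * cnj S = (\<Sum>j=1..n. cnj (a (n-j)) * y^(n+j))"
      unfolding cS sum_distrib_left by (intro sum.cong) (auto simp: power_add mult.commute mult.left_commute)
    ultimately show ?thesis by (simp add: algebra_simps)
  qed
  define g where "g = (\<lambda>i. (if i \<le> n then a i else cnj (a (2*n - i))) * y ^ i)"
  have "(\<Sum>i\<le>2*n. g i) = (\<Sum>i=0..n+n. g i)" by (simp add: atLeast0AtMost mult_2)
  also have "\<dots> = (\<Sum>i=0..n. g i) + (\<Sum>i=n+1..n+n. g i)" by (rule sum.ub_add_nat) simp
  also have "(\<Sum>i=0..n. g i) = g n + (\<Sum>i<n. g i)"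
    by (simp add: atLeast0AtMost atMost_Suc lessThan_Suc_atMost[symmetric] )
  also have "(\<Sum>i<n. g i) = (\<Sum>i<n. g (n - Suc i))" by (rule sum.nat_diff_reindex[symmetric])
  also have "\<dots> = (\<Sum>j=Suc 0..n. g (n - j))" by (rule sum.atLeast1_atMost_eq[symmetric])
  also have "\<dots> = (\<Sum>j=1..n. a (n-j) * y^(n-j))" by (intro sum.cong) (auto simp: g_def)
  also have "(\<Sum>i=n+1..n+n. g i) = (\<Sum>i=1+n..n+n. g i)" by simp
  also have "\<dots> = (\<Sum>j=1..n. g (j + n))" by (rule sum.shift_bounds_cl_nat_ivl)
  also have "\<dots> = (\<Sum>j=1..n. cnj (a (n-j)) * y^(n+j))"
    by (intro sum.cong) (auto simp: g_def add.commute mult_2)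
  finally have lhs: "(\<Sum>i\<le>2*n. g i) = g n + (\<Sum>j=1..n. a (n-j) * y^(n-j)) + (\<Sum>j=1..n. cnj (a (n-j)) * y^(n+j))"
    by simp
  show ?thesis
    using lhs rhs re by (simp add: g_def y_def S_def algebra_simps)
qed




theorem corollary5:
  fixes n :: nat and f g :: "complex \<Rightarrow> complex" and Z :: "complex set"
  assumes "n \<ge> 1"
    and "extremal n f"
    and "Im (f 0) = 0" and "Re (f 0) > 0"
    and "g holomorphic_on ball 0 1" and "\<forall>z\<in>ball 0 1. exp (g z) = f z"
    and "Z \<subseteq> sphere 0 1" and "card Z = n"
    and "\<forall>z\<in>Z. Re (taylor_coef f n
                  + 2 * (\<Sum>j=1..n. taylor_coef f (n - j) * z ^ j)) = 0"
  shows "(\<forall>j\<in>{1..n}. norm (taylor_coef g j) \<le> 2 * real n / real j)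
       \<and> norm (taylor_coef g n) \<le> 2
       \<and> (norm (taylor_coef g n) = 2 \<longleftrightarrow>
            (\<exists>\<omega>. norm \<omega> = 1 \<and>
                 Z = {\<omega> * exp (2 * of_real pi * \<i> * of_nat k / of_nat n) | k. k \<in> {1..n}}))"
proof -
  note n1 = assms(1)
  have fin: "finite Z" using assms(8) n1 by (metis card.infinite not_one_le_zero)
  have nZ: "\<And>\<zeta>. \<zeta> \<in> Z \<Longrightarrow> norm \<zeta> = 1" using assms(7) by auto
  have fB: "f \<in> B0" using assms(2) by (simp add: extremal_def)
  define A where "A = fps_expansion f 0"
  have hA: "f has_fps_expansion A" using B0_hol[OF fB] by (simp add: A_def)
  define a where "a = (\<lambda>k. taylor_coef f k)"
  have aA: "\<And>k. fps_nth A k = a k" using tc[OF hA] by (simp add: a_def)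
  have a0: "a 0 = f 0" by (simp add: a_def taylor_coef_def)
  have a0nz: "a 0 \<noteq> 0" using assms(4) a0 by auto
  have anr: "cnj (a n) = a n" using extremal_real[OF assms(2)] by (simp add: a_def complex_eq_iff)
  define d where "d = (\<lambda>i. if i \<le> n then a i else cnj (a (2*n - i)))"
  define R where "R = (\<Sum>i\<le>2*n. monom (d i) i)"
  have coeffR: "coeff R i = (if i \<le> 2*n then d i else 0)" for i
    by (simp add: R_def coeff_sum coeff_monom)
  have polyR: "poly R x = (\<Sum>i\<le>2*n. d i * x^i)" for x by (simp add: R_def poly_sum poly_monom)
  have Rnz: "R \<noteq> 0" using coeffR[of 0] a0nz by (auto simp: d_def)
  have degR: "degree R = 2*n"
  proof (rule antisym)
    show "degree R \<le> 2*n" by (rule degree_le) (simp add: coeffR)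
    have "coeff R (2*n) \<noteq> 0" using coeffR[of "2*n"] n1 a0nz by (simp add: d_def)
    thus "2*n \<le> degree R" by (rule le_degree)
  qed
  have Rid: "poly R (cnj w) = cnj w ^ n * of_real (Re (a n + 2 * (\<Sum>j=1..n. a (n-j) * w^j)))"
    if "norm w = 1" for w
    unfolding polyR d_def by (rule R_identity[where a=a and n=n and w=w, OF that anr])
  have PZ: "Re (a n + 2 * (\<Sum>j=1..n. a (n-j) * \<zeta>^j)) = 0" if "\<zeta> \<in> Z" for \<zeta>
    using assms(9) that by (simp add: a_def)
  have Ppos: "Re (a n + 2 * (\<Sum>j=1..n. a (n-j) * w^j)) \<ge> 0" if "norm w = 1" for w
    using extremal_pos[OF assms(2) that] by (simp add: a_def)
  have root: "poly R (cnj \<zeta>) = 0 \<and> poly (pderiv R) (cnj \<zeta>) = 0" if "\<zeta> \<in> Z" for \<zeta>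
  proof -
    have n\<zeta>: "norm \<zeta> = 1" using nZ that .
    have r0: "poly R (cnj \<zeta>) = 0" unfolding Rid[OF n\<zeta>] PZ[OF that] by simp
    define F1 where "F1 = (\<lambda>t::complex. poly R (cnj \<zeta> * exp (- \<i> * t)))"
    define F2 where "F2 = (\<lambda>t::complex. \<zeta>^n * exp (\<i> * of_nat n * t))"
    define Da where "Da = poly (pderiv R) (cnj \<zeta>) * (cnj \<zeta> * (- \<i>))"
    define Db where "Db = \<zeta>^n * (\<i> * of_nat n)"
    have dIn: "((\<lambda>t. cnj \<zeta> * exp (- \<i> * t)) has_field_derivative cnj \<zeta> * (- \<i>)) (at 0)"
      by (rule derivative_eq_intros refl | simp)+
    have d1: "(F1 has_field_derivative Da) (at 0)"
      unfolding F1_def Da_def using DERIV_chain2[OF poly_DERIV dIn] by simp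
    have d2: "(F2 has_field_derivative Db) (at 0)"
      unfolding F2_def Db_def by (rule derivative_eq_intros refl | simp)+
    have dd: "((\<lambda>t. F1 t * F2 t) has_field_derivative Da * F2 0 + Db * F1 0) (at 0)"
      by (rule DERIV_mult[OF d1 d2])
    have real: "F1 (of_real t) * F2 (of_real t) = of_real (Re (a n + 2 * (\<Sum>j=1..n. a (n-j) * (\<zeta> * exp (\<i> * of_real t))^j)))" for t :: real
    proof -
      define w where "w = \<zeta> * exp (\<i> * of_real t)"
      have nw: "norm w = 1" using n\<zeta> by (simp add: w_def norm_mult)
      have c1: "cnj \<zeta> * exp (- \<i> * of_real t) = cnj w" by (simp add: w_def exp_cnj)
      have c2: "F2 (of_real t) = w ^ n"
        by (simp add: F2_def w_def power_mult_distrib exp_of_nat_mult[symmetric] algebra_simps)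
      have "cnj w ^ n * w ^ n = 1"
      proof -
        have "cnj w * w = 1" using nw by (metis complex_norm_square mult.commute of_real_1 power_one)
        thus ?thesis by (metis power_mult_distrib power_one)
      qed
      hence key: "cnj w ^ n * c * w ^ n = c" for c
      proof -
        have "cnj w ^ n * c * w ^ n = (cnj w ^ n * w ^ n) * c" by (simp only: ac_simps)
        thus ?thesis using \<open>cnj w ^ n * w ^ n = 1\<close> by simp
      qed
      show ?thesis unfolding F1_def c1 c2 Rid[OF nw] w_def[symmetric] by (rule key)
    qed
    have "Da * F2 0 + Db * F1 0 = 0"
    proof (rule deriv_zero_lemma[OF dd])
      show "Im (F1 (of_real t) * F2 (of_real t)) = 0" for t using real[of t] by simp
      show "Re (F1 (of_real t) * F2 (of_real t)) \<ge> 0" for t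
        using real[of t] Ppos[of "\<zeta> * exp (\<i> * of_real t)"] n\<zeta> by (simp add: norm_mult)
      show "F1 0 * F2 0 = 0" using r0 by (simp add: F1_def)
    qed
    hence "poly (pderiv R) (cnj \<zeta>) * (cnj \<zeta> * (- \<i>)) * \<zeta>^n = 0"
      using r0 by (simp add: F1_def F2_def Da_def)
    hence "poly (pderiv R) (cnj \<zeta>) = 0" using n\<zeta> by auto
    thus ?thesis using r0 by simp
  qed
  have pdnz: "pderiv R \<noteq> 0" using degR n1 by (auto simp: pderiv_eq_0_iff)
  have ord2: "order (cnj \<zeta>) R \<ge> 2" if "\<zeta> \<in> Z" for \<zeta>
  proof -
    have "order (cnj \<zeta>) R = Suc (order (cnj \<zeta>) (pderiv R))"
      using order_pderiv[OF Rnz] root[OF that] by blast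
    moreover have "order (cnj \<zeta>) (pderiv R) \<noteq> 0" using root[OF that] pdnz order_root by blast
    ultimately show ?thesis by simp
  qed
  define Q where "Q = (\<Prod>\<zeta>\<in>Z. [:-cnj \<zeta>, 1:]^2)"
  have QR: "Q dvd R" unfolding Q_def
    by (rule poly_factor_dvd[OF fin _ Rnz]) (use ord2 in \<open>auto simp: inj_on_def\<close>)
  have degQ: "degree Q = 2*n"
  proof -
    have "degree Q = (\<Sum>\<zeta>\<in>Z. degree ([:-cnj \<zeta>, 1:]^2))" unfolding Q_def
      by (rule degree_prod_sum_eq) simp
    also have "\<dots> = (\<Sum>\<zeta>\<in>Z. 2)" by (intro sum.cong) (auto simp: degree_power_eq)
    finally show ?thesis using assms(8) by simp
  qed
  obtain c where Rc: "R = smult c Q" using dvd_same_degree[OF QR Rnz] degQ degR by auto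
  define H where "H = fps_of_poly R"
  have HA: "agree n A H" unfolding agree_def H_def using coeffR by (auto simp: aA d_def)
  define P where "P = (\<Prod>\<zeta>\<in>Z. (fps_X - fps_const (cnj \<zeta>))^2 :: complex fps)"
  define K where "K = (\<Sum>\<zeta>\<in>Z. Abs_fps (\<lambda>m. -2 * \<zeta> ^ (m+1)))"
  have HP: "H = fps_const c * P"
    unfolding H_def Rc Q_def P_def
    by (simp add: fps_of_poly_smult fps_of_poly_prod fps_of_poly_power fps_of_poly_linear flip: fps_const_neg)
  have dH: "fps_deriv H = H * K"
    unfolding HP using prod_deriv[OF fin] nZ by (simp add: P_def K_def mult.assoc)
  define G where "G = fps_expansion g 0"
  have hG: "g has_fps_expansion G" unfolding G_def
    by (rule has_fps_expansion_fps_expansion[of "ball 0 1"]) (use assms(5) in auto)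
  have df: "deriv f z = deriv g z * f z" if "z \<in> ball 0 1" for z
  proof -
    have "((\<lambda>z. exp (g z)) has_field_derivative exp (g z) * deriv g z) (at z)"
      using holomorphic_derivI[OF assms(5) open_ball that] by (rule derivative_eq_intros) simp
    hence "(f has_field_derivative exp (g z) * deriv g z) (at z)"
      by (rule has_field_derivative_transform_within_open[OF _ open_ball that]) (use assms(6) in auto)
    hence "deriv f z = exp (g z) * deriv g z" by (rule DERIV_imp_deriv)
    thus ?thesis using assms(6) that by (simp add: mult.commute)
  qed
  have "(\<lambda>z. deriv g z * f z) has_fps_expansion fps_deriv G * A"
    by (rule has_fps_expansion_mult[OF has_fps_expansion_deriv[OF hG] hA])
  moreover have "eventually (\<lambda>z. deriv f z = deriv g z * f z) (nhds 0)"
  proof -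
    have "eventually (\<lambda>z. z \<in> ball 0 1) (nhds (0::complex))" by (rule eventually_nhds_in_open) auto
    thus ?thesis by (rule eventually_mono) (auto simp: df)
  qed
  ultimately have "deriv f has_fps_expansion fps_deriv G * A"
    using has_fps_expansion_cong[of "deriv f" "\<lambda>z. deriv g z * f z" "fps_deriv G * A" "fps_deriv G * A"] by simp
  hence dA: "fps_deriv A = fps_deriv G * A"
    using fps_expansion_unique_complex has_fps_expansion_deriv[OF hA] by blast
  have A0: "fps_nth A 0 \<noteq> 0" using a0nz aA by simp
  have H0: "fps_nth H 0 \<noteq> 0" using HA A0 by (simp add: agree_def)
  have GD: "fps_deriv G = fps_deriv A * inverse A"
    using A0 by (simp add: dA mult.assoc inverse_mult_eq_1')
  have KD: "K = fps_deriv H * inverse H"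
    using H0 by (simp add: dH mult.assoc inverse_mult_eq_1' mult.commute[of H K])
  have ag1: "agree (n-1) (fps_deriv A) (fps_deriv H)"
    using HA n1 by (auto simp: agree_def fps_deriv_nth)
  have ag2: "agree (n-1) (inverse A) (inverse H)"
    using agree_inverse[OF A0 HA] by (rule agree_mono) simp
  have agK: "agree (n-1) (fps_deriv G) K"
    unfolding GD KD by (rule agree_mult[OF ag1 ag2])
  have bj: "of_nat j * taylor_coef g j = -2 * (\<Sum>\<zeta>\<in>Z. \<zeta>^j)" if "j \<in> {1..n}" for j
  proof -
    have "j - 1 \<le> n - 1" using that by auto
    hence "fps_nth (fps_deriv G) (j-1) = fps_nth K (j-1)" using agK unfolding agree_def by blast
    moreover have "fps_nth (fps_deriv G) (j-1) = of_nat j * taylor_coef g j"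
      using that by (simp add: fps_deriv_nth tc[OF hG])
    moreover have "fps_nth K (j-1) = -2 * (\<Sum>\<zeta>\<in>Z. \<zeta>^j)"
    proof -
      have jj: "j - 1 + 1 = j" using that by auto
      show ?thesis unfolding K_def fps_sum_nth fps_nth_Abs_fps jj by (simp add: sum_distrib_left)
    qed
    ultimately show ?thesis by simp
  qed
  have nb: "real j * norm (taylor_coef g j) = 2 * norm (\<Sum>\<zeta>\<in>Z. \<zeta>^j)" if "j \<in> {1..n}" for j
    using arg_cong[OF bj[OF that], of norm] by (simp add: norm_mult)
  have sle: "norm (\<Sum>\<zeta>\<in>Z. \<zeta>^j) \<le> real n" for j
  proof -
    have "norm (\<Sum>\<zeta>\<in>Z. \<zeta>^j) \<le> (\<Sum>\<zeta>\<in>Z. norm (\<zeta>^j))" by (rule norm_sum)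
    also have "\<dots> = (\<Sum>\<zeta>\<in>Z. 1)" by (intro sum.cong) (auto simp: norm_power nZ)
    finally show ?thesis using assms(8) by simp
  qed
  have part1: "\<forall>j\<in>{1..n}. norm (taylor_coef g j) \<le> 2 * real n / real j"
  proof
    fix j assume j: "j \<in> {1..n}"
    have "real j * norm (taylor_coef g j) \<le> 2 * real n" using nb[OF j] sle[of j] by simp
    moreover have "real j > 0" using j by simp
    ultimately show "norm (taylor_coef g j) \<le> 2 * real n / real j" by (simp add: field_simps)
  qed
  have nbn: "norm (taylor_coef g n) = 2 * norm (\<Sum>\<zeta>\<in>Z. \<zeta>^n) / real n"
    using nb[of n] n1 by (simp add: field_simps)
  have part2: "norm (taylor_coef g n) \<le> 2"
  proof -
    have "n \<in> {1..n}" using n1 by simp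
    hence "norm (taylor_coef g n) \<le> 2 * real n / real n" using part1 by blast
    thus ?thesis using n1 by simp
  qed
  have "norm (taylor_coef g n) = 2 \<longleftrightarrow> norm (\<Sum>\<zeta>\<in>Z. \<zeta>^n) = real n"
    using nbn n1 by (auto simp: field_simps)
  also have "\<dots> \<longleftrightarrow> (\<exists>\<omega>. norm \<omega> = 1 \<and>
                 Z = {\<omega> * exp (2 * of_real pi * \<i> * of_nat k / of_nat n) | k. k \<in> {1..n}})"
    by (rule equi[OF n1 assms(7) assms(8)])
  finally show ?thesis using part1 part2 by blast
qed


end
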